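(* If $C$ is any homogeneous binary perfect code of length $n$ (containing $0^n$), then the Vasil'ev code $V_C^0=\{(x+y,\ |x|,\ x)\mid x\in F^n,\ y\in C\}$ of length $2n+1$ is homogeneous.
   Context: $|x|=x_1+\dots+x_n\pmod 2$. For a binary perfect code $C$ of length $m$ and $y\in C$, $STS(C,y)=\{\mathrm{supp}(x+y)\mid x\in C,\ d(x,y)=3\}$, with $d$ the Hamming distance. A perfect code $C$ containing $0^m$ is homogeneous if for every $y\in C$ there is a permutation $\pi\in S_m$ with $\pi(STS(C,y))=STS(C,0^m)$. *)

theory Defs
  imports "HOL-Combinatorics.Permutations"
begin

definition words :: "nat \<Rightarrow> bool list set" where
  "words m = {x. length x = m}"

definition hdist :: "bool list \<Rightarrow> bool list \<Rightarrow> nat" where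
  "hdist x y = card {i. i < length x \<and> x ! i \<noteq> y ! i}"

definition xorw :: "bool list \<Rightarrow> bool list \<Rightarrow> bool list" where
  "xorw x y = map2 (\<noteq>) x y"

definition supp :: "bool list \<Rightarrow> nat set" where
  "supp x = {i. i < length x \<and> x ! i}"

text \<open>Parity |x| = x_1 + ... + x_n mod 2, as a bit.\<close>
definition parity :: "bool list \<Rightarrow> bool" where
  "parity x = odd (card (supp x))"

definition perfect_code :: "nat \<Rightarrow> bool list set \<Rightarrow> bool" where
  "perfect_code m C \<longleftrightarrow> C \<subseteq> words m \<and>
     (\<forall>x\<in>words m. \<exists>!c. c \<in> C \<and> hdist x c \<le> 1)"

definition STS :: "bool list set \<Rightarrow> bool list \<Rightarrow> nat set set" where
  "STS C y = {supp (xorw x y) | x. x \<in> C \<and> hdist x y = 3}"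

definition homogeneous :: "nat \<Rightarrow> bool list set \<Rightarrow> bool" where
  "homogeneous m C \<longleftrightarrow> perfect_code m C \<and> replicate m False \<in> C \<and>
     (\<forall>y\<in>C. \<exists>\<pi>. \<pi> permutes {..<m} \<and>
        (\<lambda>T. \<pi> ` T) ` STS C y = STS C (replicate m False))"

definition vasilev :: "nat \<Rightarrow> bool list set \<Rightarrow> bool list set" where
  "vasilev n C = {xorw x y @ [parity x] @ x | x y. x \<in> words n \<and> y \<in> C}"

end

theory Submission
  imports Defs
begin


definition sd :: "nat set \<Rightarrow> nat set \<Rightarrow> nat set" where
  "sd A B = (A - B) \<union> (B - A)"

definition ofs :: "nat \<Rightarrow> nat set \<Rightarrow> bool list" where
  "ofs m S = map (\<lambda>i. i \<in> S) [0..<m]"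

lemma supp_sub: "supp x \<subseteq> {..<length x}"
  by (auto simp: supp_def)

lemma length_xorw[simp]: "length (xorw x y) = min (length x) (length y)"
  by (simp add: xorw_def)

lemma supp_xorw: "length x = length y \<Longrightarrow> supp (xorw x y) = sd (supp x) (supp y)"
  by (auto simp: supp_def sd_def xorw_def)

lemma hdist_card: "length x = length y \<Longrightarrow> hdist x y = card (sd (supp x) (supp y))"
proof -
  assume "length x = length y"
  then have "{i. i < length x \<and> x ! i \<noteq> y ! i} = sd (supp x) (supp y)"
    by (auto simp: supp_def sd_def)
  then show ?thesis by (simp add: hdist_def)
qed

lemma supp_app: "supp (a @ [b] @ c) = supp a \<union> {i. i = length a \<and> b}
   \<union> {i. Suc (length a) \<le> i \<and> i - Suc (length a) \<in> supp c}"
proof (rule set_eqI)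
  fix i
  show "i \<in> supp (a @ [b] @ c) \<longleftrightarrow> i \<in> supp a \<union> {i. i = length a \<and> b}
   \<union> {i. Suc (length a) \<le> i \<and> i - Suc (length a) \<in> supp c}"
  proof (cases "i < length a")
    case True then show ?thesis by (auto simp: supp_def nth_append)
  next
    case False
    then show ?thesis
      by (cases "i = length a") (auto simp: supp_def nth_append nth_Cons')
  qed
qed

lemma supp_ofs: "S \<subseteq> {..<m} \<Longrightarrow> supp (ofs m S) = S"
  by (auto simp: supp_def ofs_def)

lemma length_ofs[simp]: "length (ofs m S) = m"
  by (simp add: ofs_def)

lemma ofs_supp: "length x = m \<Longrightarrow> ofs m (supp x) = x"
  by (auto simp: ofs_def supp_def intro!: nth_equalityI)

lemma supp_inj: "inj_on supp (words m)"
proof (rule inj_onI)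
  fix x y assume "x \<in> words m" "y \<in> words m" "supp x = supp y"
  then have lx: "length x = m" "length y = m" by (simp_all add: words_def)
  have "x = ofs m (supp x)" by (rule sym[OF ofs_supp[OF lx(1)]])
  also have "\<dots> = ofs m (supp y)" using \<open>supp x = supp y\<close> by simp
  also have "\<dots> = y" by (rule ofs_supp[OF lx(2)])
  finally show "x = y" .
qed

lemma supp_words: "supp ` words m = Pow {..<m}"
proof
  show "supp ` words m \<subseteq> Pow {..<m}" using supp_sub by (auto simp: words_def)
  show "Pow {..<m} \<subseteq> supp ` words m"
  proof
    fix S assume "S \<in> Pow {..<m}"
    then have "supp (ofs m S) = S" by (simp add: supp_ofs)
    moreover have "ofs m S \<in> words m" by (simp add: words_def)
    ultimately show "S \<in> supp ` words m" by (metis imageI)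
  qed
qed

lemma supp_repl[simp]: "supp (replicate m False) = {}"
  by (auto simp: supp_def)

lemma sd_fin: "finite A \<Longrightarrow> finite B \<Longrightarrow> finite (sd A B)"
  by (simp add: sd_def)

lemma sd_comm: "sd A B = sd B A" by (auto simp: sd_def)
lemma sd_empty[simp]: "sd A {} = A" "sd {} A = A" "sd A A = {}" by (auto simp: sd_def)

lemma card_sd_parity:
  assumes "finite A" "finite B"
  shows "odd (card (sd A B)) \<longleftrightarrow> (odd (card A) \<noteq> odd (card B))"
proof -
  have 1: "card A = card (A - B) + card (A \<inter> B)"
    using assms card_Un_disjoint[of "A - B" "A \<inter> B"] by (metis Diff_Diff_Int Diff_disjoint Diff_partition Int_lower1 card_Diff_subset_Int finite_Int le_add_diff_inverse2 card_mono)
  have 2: "card B = card (B - A) + card (A \<inter> B)"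
    using assms card_Un_disjoint[of "B - A" "A \<inter> B"] by (metis Int_commute Diff_Diff_Int Diff_disjoint Diff_partition Int_lower1 card_Diff_subset_Int finite_Int le_add_diff_inverse2 card_mono)
  have 3: "card (sd A B) = card (A - B) + card (B - A)"
    unfolding sd_def using assms by (intro card_Un_disjoint) auto
  show ?thesis using 1 2 3 by presburger
qed

lemma card_sd_tri:
  assumes "finite A" "finite B" "finite C"
  shows "card (sd A C) \<le> card (sd A B) + card (sd B C)"
proof -
  have "sd A C \<subseteq> sd A B \<union> sd B C" by (auto simp: sd_def)
  then have "card (sd A C) \<le> card (sd A B \<union> sd B C)"
    by (intro card_mono) (auto simp: sd_fin assms)
  also have "\<dots> \<le> card (sd A B) + card (sd B C)" by (rule card_Un_le)
  finally show ?thesis .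
qed



definition cover :: "nat \<Rightarrow> nat set set \<Rightarrow> bool" where
  "cover m F \<longleftrightarrow> (\<forall>S. S \<subseteq> {..<m} \<longrightarrow> (\<exists>A\<in>F. card (sd S A) \<le> 1))"

definition mind :: "nat set set \<Rightarrow> bool" where
  "mind F \<longleftrightarrow> (\<forall>A\<in>F. \<forall>B\<in>F. A \<noteq> B \<longrightarrow> 3 \<le> card (sd A B))"

lemma ex1_inj:
  assumes "inj_on f C"
  shows "(\<exists>!c. c \<in> C \<and> P (f c)) \<longleftrightarrow> (\<exists>!A. A \<in> f ` C \<and> P A)"
proof
  assume "\<exists>!c. c \<in> C \<and> P (f c)"
  then obtain c where c: "c \<in> C" "P (f c)" and u: "\<And>c'. c' \<in> C \<Longrightarrow> P (f c') \<Longrightarrow> c' = c"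
    by auto
  show "\<exists>!A. A \<in> f ` C \<and> P A"
  proof (rule ex1I[of _ "f c"])
    show "f c \<in> f ` C \<and> P (f c)" using c by simp
    fix A assume "A \<in> f ` C \<and> P A"
    then obtain c' where "c' \<in> C" "A = f c'" "P (f c')" by auto
    then show "A = f c" using u by simp
  qed
next
  assume "\<exists>!A. A \<in> f ` C \<and> P A"
  then obtain A where A: "A \<in> f ` C" "P A" and u: "\<And>B. B \<in> f ` C \<Longrightarrow> P B \<Longrightarrow> B = A"
    by auto
  obtain c where c: "c \<in> C" "A = f c" using A by auto
  show "\<exists>!c. c \<in> C \<and> P (f c)"
  proof (rule ex1I[of _ c])
    show "c \<in> C \<and> P (f c)" using c A by simp
    fix c' assume "c' \<in> C \<and> P (f c')"
    then have "f c' = f c" using u c by auto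
    then show "c' = c" using assms c \<open>c' \<in> C \<and> P (f c')\<close> by (meson inj_onD)
  qed
qed

lemma ball_image_iff: "(\<forall>S\<in>f ` A. P S) \<longleftrightarrow> (\<forall>x\<in>A. P (f x))" by blast

lemma perf_U:
  assumes "C \<subseteq> words m"
  shows "perfect_code m C \<longleftrightarrow>
    (\<forall>S. S \<subseteq> {..<m} \<longrightarrow> (\<exists>!A. A \<in> supp ` C \<and> card (sd S A) \<le> 1))"
proof -
  have inj: "inj_on supp C" by (rule inj_on_subset[OF supp_inj assms])
  have eq: "(\<exists>!c. c \<in> C \<and> hdist x c \<le> 1) \<longleftrightarrow>
      (\<exists>!A. A \<in> supp ` C \<and> card (sd (supp x) A) \<le> 1)" if x: "x \<in> words m" for x
  proof -
    have "(\<exists>!c. c \<in> C \<and> hdist x c \<le> 1) \<longleftrightarrow> (\<exists>!c. c \<in> C \<and> card (sd (supp x) (supp c)) \<le> 1)"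
    proof -
      have e: "(\<lambda>c. c \<in> C \<and> hdist x c \<le> 1) = (\<lambda>c. c \<in> C \<and> card (sd (supp x) (supp c)) \<le> 1)"
      proof (rule ext)
        fix c
        show "(c \<in> C \<and> hdist x c \<le> 1) = (c \<in> C \<and> card (sd (supp x) (supp c)) \<le> 1)"
        proof (cases "c \<in> C")
          case True
          then have "length c = m" using assms by (auto simp: words_def)
          moreover have "length x = m" using x by (simp add: words_def)
          ultimately show ?thesis using hdist_card[of x c] by simp
        qed simp
      qed
      show ?thesis by (rule arg_cong[where f=Ex1, OF e])
    qed
    also have "\<dots> \<longleftrightarrow> (\<exists>!A. A \<in> supp ` C \<and> card (sd (supp x) A) \<le> 1)"
      by (rule ex1_inj[OF inj])
    finally show ?thesis .
  qed
  have "perfect_code m C \<longleftrightarrow> (\<forall>x\<in>words m. \<exists>!c. c \<in> C \<and> hdist x c \<le> 1)"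
    using assms by (simp add: perfect_code_def)
  also have "\<dots> \<longleftrightarrow> (\<forall>x\<in>words m. \<exists>!A. A \<in> supp ` C \<and> card (sd (supp x) A) \<le> 1)"
    by (rule ball_cong[OF refl eq])
  also have "\<dots> \<longleftrightarrow> (\<forall>S\<in>supp ` words m. \<exists>!A. A \<in> supp ` C \<and> card (sd S A) \<le> 1)"
    by (rule ball_image_iff[symmetric])
  also have "\<dots> \<longleftrightarrow> (\<forall>S. S \<subseteq> {..<m} \<longrightarrow> (\<exists>!A. A \<in> supp ` C \<and> card (sd S A) \<le> 1))"
    unfolding supp_words Ball_def Pow_iff ..
  finally show ?thesis .
qed

lemma ex1_two: "(\<exists>!x. P x) \<Longrightarrow> P a \<Longrightarrow> P b \<Longrightarrow> a = b" by blast

lemma U_iff: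
  assumes F: "F \<subseteq> Pow {..<m}"
  shows "(\<forall>S. S \<subseteq> {..<m} \<longrightarrow> (\<exists>!A. A \<in> F \<and> card (sd S A) \<le> 1)) \<longleftrightarrow> cover m F \<and> mind F"
proof
  assume U: "\<forall>S. S \<subseteq> {..<m} \<longrightarrow> (\<exists>!A. A \<in> F \<and> card (sd S A) \<le> 1)"
  have "cover m F" unfolding cover_def
  proof (intro allI impI)
    fix S assume "S \<subseteq> {..<m}"
    then obtain A where "A \<in> F \<and> card (sd S A) \<le> 1" using U by (meson ex1E)
    then show "\<exists>A\<in>F. card (sd S A) \<le> 1" by blast
  qed
  moreover have "mind F" unfolding mind_def
  proof (intro ballI impI)
    fix A B assume A: "A \<in> F" and B: "B \<in> F" and ne: "A \<noteq> B"
    have As: "A \<subseteq> {..<m}" and Bs: "B \<subseteq> {..<m}" using A B F by auto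
    have fin: "finite A" "finite B" using As Bs by (meson finite_lessThan finite_subset)+
    show "3 \<le> card (sd A B)"
    proof (rule ccontr)
      assume "\<not> 3 \<le> card (sd A B)"
      then have c: "card (sd A B) \<le> 1 \<or> card (sd A B) = 2" by linarith
      then show False
      proof
        assume "card (sd A B) \<le> 1"
        then have "card (sd A A) \<le> 1" "card (sd A B) \<le> 1" by auto
        then show False using ex1_two[OF U[rule_format, OF As], of A B] A B ne by blast
      next
        assume "card (sd A B) = 2"
        then obtain i j where ij: "sd A B = {i, j}" "i \<noteq> j" by (auto simp: card_2_iff)
        have im: "i < m" using ij As Bs by (auto simp: sd_def set_eq_iff) 
        define S where "S = sd A {i}"
        have Ss: "S \<subseteq> {..<m}" using As im by (auto simp: S_def sd_def)
        have "sd S A = {i}" by (auto simp: S_def sd_def)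
        then have 1: "card (sd S A) \<le> 1" by simp
        have "sd S B = {j}" using ij by (auto simp: S_def sd_def set_eq_iff)
        then have 2: "card (sd S B) \<le> 1" by simp
        show False using ex1_two[OF U[rule_format, OF Ss], of A B] 1 2 A B ne by blast
      qed
    qed
  qed
  ultimately show "cover m F \<and> mind F" ..
next
  assume cm: "cover m F \<and> mind F"
  show "\<forall>S. S \<subseteq> {..<m} \<longrightarrow> (\<exists>!A. A \<in> F \<and> card (sd S A) \<le> 1)"
  proof (intro allI impI)
    fix S assume S: "S \<subseteq> {..<m}"
    obtain A where A: "A \<in> F" "card (sd S A) \<le> 1" using cm S unfolding cover_def by blast
    show "\<exists>!A. A \<in> F \<and> card (sd S A) \<le> 1"
    proof (rule ex1I[of _ A])
      show "A \<in> F \<and> card (sd S A) \<le> 1" using A by blast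
      fix B assume B: "B \<in> F \<and> card (sd S B) \<le> 1"
      have fin: "finite A" "finite B" "finite S" using A B F S by (meson PowD finite_lessThan finite_subset subsetD)+
      have "card (sd B A) \<le> card (sd B S) + card (sd S A)" by (rule card_sd_tri) (use fin in auto)
      also have "\<dots> \<le> 2" using A B sd_comm[of B S] by simp
      finally have le2: "card (sd B A) \<le> 2" .
      show "B = A"
      proof (rule ccontr)
        assume "B \<noteq> A"
        then have "3 \<le> card (sd B A)" using cm A B unfolding mind_def by blast
        then show False using le2 by linarith
      qed
    qed
  qed
qed

lemma perf_iff:
  assumes "C \<subseteq> words m"
  shows "perfect_code m C \<longleftrightarrow> cover m (supp ` C) \<and> mind (supp ` C)"
proof -
  have FF: "supp ` C \<subseteq> Pow {..<m}" using assms supp_words by blast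
  show ?thesis using perf_U[OF assms] U_iff[OF FF] by simp
qed

lemma perf_words: "perfect_code m C \<Longrightarrow> C \<subseteq> words m"
  by (simp add: perfect_code_def)

lemma STS_s:
  assumes "C \<subseteq> words m" "y \<in> words m"
  shows "STS C y = {sd A (supp y) | A. A \<in> supp ` C \<and> card (sd A (supp y)) = 3}"
proof -
  have l: "length x = length y" if "x \<in> C" for x using that assms by (auto simp: words_def)
  show ?thesis
  proof (rule set_eqI)
    fix T
    show "T \<in> STS C y \<longleftrightarrow> T \<in> {sd A (supp y) | A. A \<in> supp ` C \<and> card (sd A (supp y)) = 3}"
    proof
      assume "T \<in> STS C y"
      then obtain x where x: "x \<in> C" "T = supp (xorw x y)" "hdist x y = 3" unfolding STS_def by blast
      then have "T = sd (supp x) (supp y)" "card (sd (supp x) (supp y)) = 3"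
        using supp_xorw[OF l] hdist_card[OF l] by auto
      then show "T \<in> {sd A (supp y) | A. A \<in> supp ` C \<and> card (sd A (supp y)) = 3}"
        using x(1) by blast
    next
      assume "T \<in> {sd A (supp y) | A. A \<in> supp ` C \<and> card (sd A (supp y)) = 3}"
      then obtain x where x: "x \<in> C" "T = sd (supp x) (supp y)" "card (sd (supp x) (supp y)) = 3" by blast
      then have "T = supp (xorw x y)" "hdist x y = 3"
        using supp_xorw[OF l] hdist_card[OF l] by auto
      then show "T \<in> STS C y" using x(1) unfolding STS_def by blast
    qed
  qed
qed



definition E :: "nat \<Rightarrow> nat set \<Rightarrow> bool \<Rightarrow> nat set \<Rightarrow> nat set" where
  "E n a b c = a \<union> {i. i = n \<and> b} \<union> (\<lambda>j. j + Suc n) ` c"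

definition enc :: "nat \<Rightarrow> nat set \<Rightarrow> nat set \<Rightarrow> nat set" where
  "enc n X Y = E n (sd X Y) (odd (card X)) X"

definition Gv :: "nat \<Rightarrow> nat set set \<Rightarrow> nat set set" where
  "Gv n F = {enc n X Y | X Y. X \<subseteq> {..<n} \<and> Y \<in> F}"

lemma shift_eq: "{i. Suc n \<le> i \<and> i - Suc n \<in> c} = (\<lambda>j. j + Suc n) ` c"
proof (rule set_eqI)
  fix x
  show "x \<in> {i. Suc n \<le> i \<and> i - Suc n \<in> c} \<longleftrightarrow> x \<in> (\<lambda>j. j + Suc n) ` c"
  proof
    assume "x \<in> {i. Suc n \<le> i \<and> i - Suc n \<in> c}"
    then have "x = (x - Suc n) + Suc n" "x - Suc n \<in> c" by auto
    then show "x \<in> (\<lambda>j. j + Suc n) ` c" by (rule image_eqI)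
  qed auto
qed

lemma E_mem: "x \<in> E n a b c \<longleftrightarrow> x \<in> a \<or> (x = n \<and> b) \<or> (Suc n \<le> x \<and> x - Suc n \<in> c)"
  unfolding E_def shift_eq[symmetric] by auto

lemma E_sd:
  assumes "a \<subseteq> {..<n}" "c \<subseteq> {..<n}" "a' \<subseteq> {..<n}" "c' \<subseteq> {..<n}"
  shows "sd (E n a b c) (E n a' b' c') = E n (sd a a') (b \<noteq> b') (sd c c')"
proof (rule set_eqI)
  fix x
  show "x \<in> sd (E n a b c) (E n a' b' c') \<longleftrightarrow> x \<in> E n (sd a a') (b \<noteq> b') (sd c c')"
  proof (cases "x < n")
    case True
    then show ?thesis by (auto simp: E_mem sd_def)
  next
    case False
    then have "x \<notin> a" "x \<notin> a'" using assms by auto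
    then show ?thesis by (auto simp: E_mem sd_def)
  qed
qed

lemma E_sub:
  assumes "a \<subseteq> {..<n}" "c \<subseteq> {..<n}"
  shows "E n a b c \<subseteq> {..<2*n+1}"
  using assms unfolding E_def by auto

lemma card_E:
  assumes "a \<subseteq> {..<n}" "c \<subseteq> {..<n}"
  shows "card (E n a b c) = card a + (if b then 1 else 0) + card c"
proof -
  have fa: "finite a" "finite c" using assms finite_subset by blast+
  have 1: "card ((\<lambda>j. j + Suc n) ` c) = card c" by (rule card_image) (auto simp: inj_on_def)
  have 2: "card {i. i = n \<and> b} = (if b then 1 else 0)" by auto
  have "card (a \<union> {i. i = n \<and> b} \<union> (\<lambda>j. j + Suc n) ` c)
      = card (a \<union> {i. i = n \<and> b}) + card ((\<lambda>j. j + Suc n) ` c)"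
    by (rule card_Un_disjoint) (use fa assms in auto)
  also have "card (a \<union> {i. i = n \<and> b}) = card a + card {i. i = n \<and> b}"
    by (rule card_Un_disjoint) (use fa assms in auto)
  finally show ?thesis unfolding E_def using 1 2 by simp
qed

lemma supp_vas:
  assumes "length x = n" "length y = n"
  shows "supp (xorw x y @ [parity x] @ x) = enc n (supp x) (supp y)"
proof -
  have "supp (xorw x y @ [parity x] @ x) = supp (xorw x y) \<union> {i. i = length (xorw x y) \<and> parity x}
     \<union> {i. Suc (length (xorw x y)) \<le> i \<and> i - Suc (length (xorw x y)) \<in> supp x}"
    by (rule supp_app)
  also have "\<dots> = enc n (supp x) (supp y)"
    unfolding enc_def E_def shift_eq[symmetric] using assms by (simp add: supp_xorw parity_def)
  finally show ?thesis .
qed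

lemma vas_elem:
  assumes "C \<subseteq> words n"
  shows "v \<in> vasilev n C \<longleftrightarrow> (\<exists>x y. x \<in> words n \<and> y \<in> C \<and> v = xorw x y @ [parity x] @ x)"
  unfolding vasilev_def by blast

lemma vas_words:
  assumes "C \<subseteq> words n"
  shows "vasilev n C \<subseteq> words (2*n+1)"
proof
  fix v assume "v \<in> vasilev n C"
  then obtain x y where xy: "x \<in> words n" "y \<in> C" "v = xorw x y @ [parity x] @ x"
    unfolding vasilev_def by blast
  then have "length x = n" "length y = n" using assms by (auto simp: words_def)
  then show "v \<in> words (2*n+1)" using xy by (simp add: words_def)
qed

lemma zero_vas:
  assumes "replicate n False \<in> C"
  shows "replicate (2*n+1) False \<in> vasilev n C"
proof -
  have x: "xorw (replicate n False) (replicate n False) = replicate n False"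
    by (simp add: xorw_def zip_replicate)
  have p: "parity (replicate n False) = False" by (simp add: parity_def)
  have r: "replicate (2*n+1) False = replicate n False @ replicate (Suc n) False"
  proof -
    have "2*n+1 = n + Suc n" by simp
    then show ?thesis by (simp only: replicate_add)
  qed
  have eq: "replicate (2*n+1) False = xorw (replicate n False) (replicate n False) @ [parity (replicate n False)] @ replicate n False"
    unfolding x p r by simp
  have w: "replicate n False \<in> words n" by (simp add: words_def)
  show ?thesis unfolding vasilev_def
    apply (rule CollectI)
    apply (rule exI[of _ "replicate n False"])
    apply (rule exI[of _ "replicate n False"])
    using eq w assms by blast
qed

lemma supp_vasilev:
  assumes "C \<subseteq> words n"
  shows "supp ` vasilev n C = Gv n (supp ` C)"
proof (rule set_eqI)
  fix T
  show "T \<in> supp ` vasilev n C \<longleftrightarrow> T \<in> Gv n (supp ` C)"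
  proof
    assume "T \<in> supp ` vasilev n C"
    then obtain x y where xy: "x \<in> words n" "y \<in> C" "T = supp (xorw x y @ [parity x] @ x)"
      unfolding vasilev_def by blast
    then have "length x = n" "length y = n" using assms by (auto simp: words_def)
    then have "T = enc n (supp x) (supp y)" using xy supp_vas by simp
    moreover have "supp x \<subseteq> {..<n}" using supp_sub \<open>length x = n\<close> by blast
    ultimately show "T \<in> Gv n (supp ` C)" unfolding Gv_def using xy(2) by blast
  next
    assume "T \<in> Gv n (supp ` C)"
    then obtain X y where Xy: "X \<subseteq> {..<n}" "y \<in> C" "T = enc n X (supp y)" unfolding Gv_def by blast
    define x where "x = ofs n X"
    have sx: "supp x = X" using Xy supp_ofs x_def by simp
    have lx: "length x = n" "x \<in> words n" by (simp_all add: x_def words_def)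
    have "length y = n" using assms Xy by (auto simp: words_def)
    then have "T = supp (xorw x y @ [parity x] @ x)" using supp_vas lx sx Xy by simp
    moreover have "xorw x y @ [parity x] @ x \<in> vasilev n C" unfolding vasilev_def using lx Xy by blast
    ultimately show "T \<in> supp ` vasilev n C" by blast
  qed
qed



lemma sd_sub: "A \<subseteq> {..<n} \<Longrightarrow> B \<subseteq> {..<n} \<Longrightarrow> sd A B \<subseteq> {..<n}"
  by (auto simp: sd_def)

lemma fin_sub: fixes A :: "nat set" assumes "A \<subseteq> {..<n}" shows "finite A"
  using finite_subset[OF assms] by simp

lemma sd_assoc: "sd (sd A B) C = sd A (sd B C)" by (auto simp: sd_def)

lemma enc_sd:
  assumes "X \<subseteq> {..<n}" "Y \<subseteq> {..<n}" "X0 \<subseteq> {..<n}" "Y0 \<subseteq> {..<n}"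
  shows "sd (enc n X Y) (enc n X0 Y0) = enc n (sd X X0) (sd Y Y0)"
proof -
  have p: "(odd (card X) \<noteq> odd (card X0)) = odd (card (sd X X0))"
    using card_sd_parity[OF fin_sub[OF assms(1)] fin_sub[OF assms(3)]] by simp
  have s: "sd (sd X Y) (sd X0 Y0) = sd (sd X X0) (sd Y Y0)" by (auto simp: sd_def)
  show ?thesis unfolding enc_def
    E_sd[OF sd_sub[OF assms(1,2)] assms(1) sd_sub[OF assms(3,4)] assms(3)] p s ..
qed

lemma card_enc:
  assumes "X \<subseteq> {..<n}" "Y \<subseteq> {..<n}"
  shows "card (enc n X Y) = card (sd X Y) + (if odd (card X) then 1 else 0) + card X"
  unfolding enc_def by (rule card_E) (use assms sd_sub in auto)

lemma enc_sub: "X \<subseteq> {..<n} \<Longrightarrow> Y \<subseteq> {..<n} \<Longrightarrow> enc n X Y \<subseteq> {..<2*n+1}"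
  unfolding enc_def using E_sub sd_sub by blast

lemma Gv_sub: "F \<subseteq> Pow {..<n} \<Longrightarrow> Gv n F \<subseteq> Pow {..<2*n+1}"
  unfolding Gv_def using enc_sub by blast

lemma mind_Gv:
  assumes F: "F \<subseteq> Pow {..<n}" and m: "mind F"
  shows "mind (Gv n F)"
  unfolding mind_def
proof (intro ballI impI)
  fix A B assume A: "A \<in> Gv n F" and B: "B \<in> Gv n F" and ne: "A \<noteq> B"
  obtain X Y where XY: "X \<subseteq> {..<n}" "Y \<in> F" "A = enc n X Y" using A unfolding Gv_def by blast
  obtain X' Y' where XY': "X' \<subseteq> {..<n}" "Y' \<in> F" "B = enc n X' Y'" using B unfolding Gv_def by blast
  have Ys: "Y \<subseteq> {..<n}" "Y' \<subseteq> {..<n}" using XY XY' F by auto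
  define P where "P = sd X X'"
  define Q where "Q = sd Y Y'"
  have Ps: "P \<subseteq> {..<n}" "Q \<subseteq> {..<n}" unfolding P_def Q_def using XY XY' Ys sd_sub by auto
  have c: "card (sd A B) = card (sd P Q) + (if odd (card P) then 1 else 0) + card P"
    unfolding XY(3) XY'(3) enc_sd[OF XY(1) Ys(1) XY'(1) Ys(2)] P_def[symmetric] Q_def[symmetric]
    by (rule card_enc[OF Ps])
  show "3 \<le> card (sd A B)"
  proof (cases "Y = Y'")
    case True
    then have Q0: "Q = {}" unfolding Q_def by simp
    have "X \<noteq> X'" using ne True XY XY' by auto
    then have "P \<noteq> {}" unfolding P_def by (auto simp: sd_def)
    then have "card P \<ge> 1" using fin_sub[OF Ps(1)] by (simp add: Suc_le_eq card_gt_0_iff)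
    then show ?thesis using c Q0 by (cases "card P = 1") auto
  next
    case False
    then have "3 \<le> card Q" using m XY XY' unfolding mind_def Q_def by blast
    also have "card Q \<le> card (sd Q P) + card (sd P {})"
      using card_sd_tri[of Q P "{}"] fin_sub[OF Ps(1)] fin_sub[OF Ps(2)] by simp
    also have "\<dots> = card (sd P Q) + card P" by (simp add: sd_comm)
    finally show ?thesis using c by linarith
  qed
qed

lemma S_decomp:
  assumes "S \<subseteq> {..<2*n+1}"
  shows "S = E n (S \<inter> {..<n}) (n \<in> S) {j. j < n \<and> j + Suc n \<in> S}"
proof (rule set_eqI)
  fix x show "x \<in> S \<longleftrightarrow> x \<in> E n (S \<inter> {..<n}) (n \<in> S) {j. j < n \<and> j + Suc n \<in> S}"
  proof (cases "x \<le> n")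
    case True then show ?thesis by (cases "x = n") (auto simp: E_mem)
  next
    case False
    then have "x - Suc n + Suc n = x" by simp
    moreover have "x \<in> S \<Longrightarrow> x - Suc n < n" using assms False by auto
    ultimately show ?thesis using False by (auto simp: E_mem)
  qed
qed

lemma cover_Gv:
  assumes F: "F \<subseteq> Pow {..<n}" and cv: "cover n F"
  shows "cover (2*n+1) (Gv n F)"
  unfolding cover_def
proof (intro allI impI)
  fix S assume S: "S \<subseteq> {..<2*n+1}"
  define a where "a = S \<inter> {..<n}"
  define b where "b = (n \<in> S)"
  define c where "c = {j. j < n \<and> j + Suc n \<in> S}"
  have ac: "a \<subseteq> {..<n}" "c \<subseteq> {..<n}" unfolding a_def c_def by auto
  have Se: "S = E n a b c" unfolding a_def b_def c_def by (rule S_decomp[OF S])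
  have key: "card (sd S (enc n X Y)) = card (sd a (sd X Y)) + (if b \<noteq> odd (card X) then 1 else 0) + card (sd c X)"
    if X: "X \<subseteq> {..<n}" and Y: "Y \<subseteq> {..<n}" for X Y
  proof -
    have "sd S (enc n X Y) = E n (sd a (sd X Y)) (b \<noteq> odd (card X)) (sd c X)"
      unfolding Se enc_def by (rule E_sd) (use ac X Y sd_sub in auto)
    then show ?thesis using card_E ac X Y sd_sub by simp
  qed
  define s where "s = sd a c"
  have ss: "s \<subseteq> {..<n}" unfolding s_def using ac sd_sub by auto
  obtain Y where Y: "Y \<in> F" "card (sd s Y) \<le> 1" using cv ss unfolding cover_def by blast
  have Ys: "Y \<subseteq> {..<n}" using Y F by auto
  have fsY: "finite (sd s Y)" using sd_sub[OF ss Ys] fin_sub by blast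
  show "\<exists>A\<in>Gv n F. card (sd S A) \<le> 1"
  proof (cases "card (sd s Y) = 0 \<or> b = odd (card c)")
    case True
    have e1: "sd a (sd c Y) = sd s Y" unfolding s_def by (simp add: sd_assoc)
    have "card (sd S (enc n c Y)) = card (sd s Y) + (if b \<noteq> odd (card c) then 1 else 0)"
      using key[OF ac(2) Ys] e1 by simp
    then have "card (sd S (enc n c Y)) \<le> 1" using True Y by auto
    moreover have "enc n c Y \<in> Gv n F" unfolding Gv_def using ac Y by blast
    ultimately show ?thesis by blast
  next
    case False
    then have "card (sd s Y) = 1" "b \<noteq> odd (card c)" using Y by auto
    then obtain i where i: "sd s Y = {i}" by (auto simp: card_Suc_eq)
    have iN: "i < n" using sd_sub[OF ss Ys] i by auto
    define X where "X = sd c {i}"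
    have Xs: "X \<subseteq> {..<n}" unfolding X_def using ac iN sd_sub by auto
    have pX: "odd (card X) = (odd (card c) \<noteq> odd (card {i}))"
      unfolding X_def by (rule card_sd_parity) (use fin_sub[OF ac(2)] in auto)
    have e1: "sd a (sd X Y) = {}" unfolding X_def
    proof -
      have "sd a (sd (sd c {i}) Y) = sd (sd s Y) {i}" unfolding s_def by (auto simp: sd_def)
      then show "sd a (sd (sd c {i}) Y) = {}" using i by simp
    qed
    have e2: "sd c X = {i}" unfolding X_def by (auto simp: sd_def)
    have "card (sd S (enc n X Y)) = 1"
      using key[OF Xs Ys] e1 e2 pX \<open>b \<noteq> odd (card c)\<close> by simp
    moreover have "enc n X Y \<in> Gv n F" unfolding Gv_def using Xs Y by blast
    ultimately show ?thesis by (intro bexI[of _ "enc n X Y"]) auto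
  qed
qed



definition sSTS :: "nat set set \<Rightarrow> nat set \<Rightarrow> nat set set" where
  "sSTS F B = {sd A B | A. A \<in> F \<and> card (sd A B) = 3}"

definition Wt :: "nat \<Rightarrow> nat set set \<Rightarrow> nat set set" where
  "Wt n D = {enc n X Z | X Z. X \<subseteq> {..<n} \<and> Z \<in> D \<and> card (enc n X Z) = 3}"

lemma enc_empty: "enc n {} {} = {}"
  by (simp add: enc_def E_def)

lemma sd_cancel: "sd (sd X X0) X0 = X" by (auto simp: sd_def)

lemma sSTS_Gv:
  assumes F: "F \<subseteq> Pow {..<n}" and X0: "X0 \<subseteq> {..<n}" and Y0: "Y0 \<subseteq> {..<n}"
  shows "sSTS (Gv n F) (enc n X0 Y0) = Wt n ((\<lambda>Y. sd Y Y0) ` F)"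
proof (rule set_eqI)
  fix T
  show "T \<in> sSTS (Gv n F) (enc n X0 Y0) \<longleftrightarrow> T \<in> Wt n ((\<lambda>Y. sd Y Y0) ` F)"
  proof
    assume "T \<in> sSTS (Gv n F) (enc n X0 Y0)"
    then obtain A where A: "A \<in> Gv n F" "T = sd A (enc n X0 Y0)" "card (sd A (enc n X0 Y0)) = 3"
      unfolding sSTS_def by blast
    then obtain X Y where XY0: "X \<subseteq> {..<n}" "Y \<in> F" "A = enc n X Y"
      unfolding Gv_def by blast
    have XY: "X \<subseteq> {..<n}" "Y \<in> F" "T = sd (enc n X Y) (enc n X0 Y0)"
      "card (sd (enc n X Y) (enc n X0 Y0)) = 3" using XY0 A by auto
    have Ys: "Y \<subseteq> {..<n}" using XY F by auto
    have e: "sd (enc n X Y) (enc n X0 Y0) = enc n (sd X X0) (sd Y Y0)"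
      by (rule enc_sd[OF XY(1) Ys X0 Y0])
    have "sd X X0 \<subseteq> {..<n}" using sd_sub XY(1) X0 by blast
    have "T = enc n (sd X X0) (sd Y Y0) \<and> sd Y Y0 \<in> (\<lambda>Y. sd Y Y0) ` F \<and> card (enc n (sd X X0) (sd Y Y0)) = 3"
      using XY e by auto
    then show "T \<in> Wt n ((\<lambda>Y. sd Y Y0) ` F)"
      unfolding Wt_def using \<open>sd X X0 \<subseteq> {..<n}\<close> by blast
  next
    assume "T \<in> Wt n ((\<lambda>Y. sd Y Y0) ` F)"
    then obtain X Z where XZ: "X \<subseteq> {..<n}" "Z \<in> (\<lambda>Y. sd Y Y0) ` F" "T = enc n X Z" "card (enc n X Z) = 3"
      unfolding Wt_def by blast
    then obtain Y where "Y \<in> F" "Z = sd Y Y0" by blast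
    then have XY: "X \<subseteq> {..<n}" "Y \<in> F" "T = enc n X (sd Y Y0)" "card (enc n X (sd Y Y0)) = 3"
      using XZ by auto
    have Ys: "Y \<subseteq> {..<n}" using XY F by auto
    have X1: "sd X X0 \<subseteq> {..<n}" using sd_sub XY(1) X0 by blast
    have e: "sd (enc n (sd X X0) Y) (enc n X0 Y0) = enc n X (sd Y Y0)"
      using enc_sd[OF X1 Ys X0 Y0] sd_cancel by simp
    have g: "enc n (sd X X0) Y \<in> Gv n F" unfolding Gv_def using X1 XY by blast
    have "T = sd (enc n (sd X X0) Y) (enc n X0 Y0) \<and> enc n (sd X X0) Y \<in> Gv n F
       \<and> card (sd (enc n (sd X X0) Y) (enc n X0 Y0)) = 3" using g e XY by simp
    then show "T \<in> sSTS (Gv n F) (enc n X0 Y0)"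
      unfolding sSTS_def by blast
  qed
qed

definition sig :: "nat \<Rightarrow> (nat \<Rightarrow> nat) \<Rightarrow> nat \<Rightarrow> nat" where
  "sig n p i = (if i < n then p i else if i = n then n
     else if i < Suc (2*n) then p (i - Suc n) + Suc n else i)"

lemma sig_inv:
  assumes p: "p permutes {..<n}" and q: "q permutes {..<n}" and pq: "\<And>x. p (q x) = x"
  shows "sig n p (sig n q i) = i"
proof -
  consider "i < n" | "i = n" | "n < i \<and> i < Suc (2*n)" | "Suc (2*n) \<le> i" by linarith
  then show ?thesis
  proof cases
    case 1
    then have "q i < n" using permutes_in_image[OF q] by simp
    then show ?thesis using 1 pq by (simp add: sig_def)
  next
    case 2 then show ?thesis by (simp add: sig_def)
  next
    case 3
    then have "i - Suc n < n" by arith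
    then have "q (i - Suc n) < n" using permutes_in_image[OF q] by simp
    then show ?thesis using 3 pq by (simp add: sig_def)
  next
    case 4 then show ?thesis by (simp add: sig_def)
  qed
qed

lemma sig_range:
  assumes p: "p permutes {..<n}" and i: "i < 2*n+1"
  shows "sig n p i < 2*n+1"
proof -
  have "i - Suc n < n \<Longrightarrow> p (i - Suc n) < n" using permutes_in_image[OF p] by simp
  moreover have "i < n \<Longrightarrow> p i < n" using permutes_in_image[OF p] by simp
  ultimately show ?thesis using i by (auto simp: sig_def)
qed

lemma sig_perm:
  assumes p: "p permutes {..<n}"
  shows "sig n p permutes {..<2*n+1}"
proof (rule bij_imp_permutes)
  have q: "inv p permutes {..<n}" by (rule permutes_inv[OF p])
  show "bij_betw (sig n p) {..<2 * n + 1} {..<2 * n + 1}"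
  proof (rule bij_betw_byWitness[where f'="sig n (inv p)"])
    show "\<forall>a\<in>{..<2 * n + 1}. sig n (inv p) (sig n p a) = a"
      using sig_inv[OF q p] permutes_inverses(2)[OF p] by blast
    show "\<forall>a'\<in>{..<2 * n + 1}. sig n p (sig n (inv p) a') = a'"
      using sig_inv[OF p q] permutes_inverses(1)[OF p] by blast
    show "sig n p ` {..<2 * n + 1} \<subseteq> {..<2 * n + 1}" using sig_range[OF p] by auto
    show "sig n (inv p) ` {..<2 * n + 1} \<subseteq> {..<2 * n + 1}" using sig_range[OF q] by auto
  qed
  fix x assume "x \<notin> {..<2 * n + 1}"
  then show "sig n p x = x" by (simp add: sig_def)
qed

lemma sig_E:
  assumes p: "p permutes {..<n}" and a: "a \<subseteq> {..<n}" and c: "c \<subseteq> {..<n}"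
  shows "sig n p ` E n a b c = E n (p ` a) b (p ` c)"
proof -
  have 1: "sig n p ` a = p ` a"
    by (rule image_cong) (use a in \<open>auto simp: sig_def\<close>)
  have 2: "sig n p ` {i. i = n \<and> b} = {i. i = n \<and> b}"
    by (cases b) (auto simp: sig_def)
  have 3: "sig n p ` ((\<lambda>j. j + Suc n) ` c) = (\<lambda>j. j + Suc n) ` (p ` c)"
    unfolding image_image by (rule image_cong) (use c in \<open>auto simp: sig_def\<close>)
  show ?thesis unfolding E_def image_Un 1 2 3 ..
qed

lemma sig_enc:
  assumes p: "p permutes {..<n}" and X: "X \<subseteq> {..<n}" and Z: "Z \<subseteq> {..<n}"
  shows "sig n p ` enc n X Z = enc n (p ` X) (p ` Z)"
proof -
  have inj: "inj p" by (rule permutes_inj[OF p])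
  have 1: "p ` sd X Z = sd (p ` X) (p ` Z)"
    unfolding sd_def image_Un image_set_diff[OF inj] ..
  have 2: "card (p ` X) = card X" by (rule card_image) (rule permutes_inj_on[OF p])
  show ?thesis unfolding enc_def
    by (subst sig_E[OF p sd_sub[OF X Z] X]) (simp only: 1 2)
qed

lemma card_le3:
  assumes X: "X \<subseteq> {..<n}" and Z: "Z \<subseteq> {..<n}" and c: "card (enc n X Z) = 3"
  shows "card Z \<le> 3"
proof -
  have "card (sd Z {}) \<le> card (sd Z X) + card (sd X {})"
    by (rule card_sd_tri) (use fin_sub[OF X] fin_sub[OF Z] in auto)
  then have "card Z \<le> card (sd X Z) + card X" by (simp add: sd_comm)
  then show ?thesis using card_enc[OF X Z] c by linarith
qed

lemma gen:
  assumes p: "p permutes {..<n}" and D: "D \<subseteq> Pow {..<n}"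
    and dich: "\<And>Z. Z \<in> D \<Longrightarrow> Z = {} \<or> 3 \<le> card Z"
    and im: "\<And>Z. Z \<in> D \<Longrightarrow> card Z = 3 \<Longrightarrow> p ` Z \<in> E'"
    and e: "{} \<in> E'"
  shows "(\<lambda>T. sig n p ` T) ` Wt n D \<subseteq> Wt n E'"
proof
  fix T assume "T \<in> (\<lambda>T. sig n p ` T) ` Wt n D"
  then obtain X Z where XZ: "X \<subseteq> {..<n}" "Z \<in> D" "card (enc n X Z) = 3" "T = sig n p ` enc n X Z"
    unfolding Wt_def by blast
  have Zs: "Z \<subseteq> {..<n}" using XZ D by auto
  have "card Z \<le> 3" by (rule card_le3[OF XZ(1) Zs XZ(3)])
  then have pZ: "p ` Z \<in> E'" using dich[OF XZ(2)] im[OF XZ(2)] e by (cases "Z = {}") auto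
  have T: "T = enc n (p ` X) (p ` Z)" using XZ(4) sig_enc[OF p XZ(1) Zs] by simp
  have pX: "p ` X \<subseteq> {..<n}" using XZ(1) permutes_in_image[OF p] by auto
  have "card T = card (enc n X Z)" unfolding XZ(4)
    by (rule card_image) (rule permutes_inj_on[OF sig_perm[OF p]])
  then have "card (enc n (p ` X) (p ` Z)) = 3" using T XZ(3) by simp
  then show "T \<in> Wt n E'" unfolding Wt_def using T pX pZ by blast
qed



lemma main_set:
  assumes F: "F \<subseteq> Pow {..<n}" and e: "{} \<in> F" and m: "mind F" and Y0: "Y0 \<in> F"
    and X0: "X0 \<subseteq> {..<n}" and p: "p permutes {..<n}"
    and h: "(\<lambda>T. p ` T) ` sSTS F Y0 = sSTS F {}"
  shows "\<exists>s. s permutes {..<2*n+1} \<and>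
     (\<lambda>T. s ` T) ` sSTS (Gv n F) (enc n X0 Y0) = sSTS (Gv n F) {}"
proof -
  define D where "D = (\<lambda>Y. sd Y Y0) ` F"
  have Y0s: "Y0 \<subseteq> {..<n}" using Y0 F by auto
  have L: "sSTS (Gv n F) (enc n X0 Y0) = Wt n D"
    unfolding D_def by (rule sSTS_Gv[OF F X0 Y0s])
  have "sSTS (Gv n F) (enc n {} {}) = Wt n ((\<lambda>Y. sd Y {}) ` F)"
    by (rule sSTS_Gv[OF F]) auto
  then have R: "sSTS (Gv n F) {} = Wt n F" by (simp add: enc_empty)
  have Ds: "D \<subseteq> Pow {..<n}" unfolding D_def using F Y0s sd_sub by blast
  have q: "inv p permutes {..<n}" by (rule permutes_inv[OF p])
  have sub1: "(\<lambda>T. sig n p ` T) ` Wt n D \<subseteq> Wt n F"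
  proof (rule gen[OF p Ds])
    fix Z assume "Z \<in> D"
    then obtain Y where Y: "Y \<in> F" "Z = sd Y Y0" unfolding D_def by blast
    show "Z = {} \<or> 3 \<le> card Z"
    proof (cases "Y = Y0")
      case True then show ?thesis using Y by simp
    next
      case False then show ?thesis using m Y Y0 unfolding mind_def by blast
    qed
  next
    fix Z assume "Z \<in> D" "card Z = 3"
    then obtain Y where Y: "Y \<in> F" "Z = sd Y Y0" unfolding D_def by blast
    then have "Z \<in> sSTS F Y0" unfolding sSTS_def using \<open>card Z = 3\<close> by blast
    then have "p ` Z \<in> sSTS F {}" using h by blast
    then show "p ` Z \<in> F" unfolding sSTS_def by auto
  next
    show "{} \<in> F" by (rule e)
  qed
  have sub2: "(\<lambda>T. sig n (inv p) ` T) ` Wt n F \<subseteq> Wt n D"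
  proof (rule gen[OF q F])
    fix Z assume Z: "Z \<in> F"
    show "Z = {} \<or> 3 \<le> card Z"
    proof (cases "Z = {}")
      case False then have "3 \<le> card (sd Z {})" using m Z e unfolding mind_def by blast
      then show ?thesis by simp
    qed simp
  next
    fix Z assume Z: "Z \<in> F" "card Z = 3"
    then have "Z \<in> sSTS F {}" unfolding sSTS_def
      by (metis (mono_tags, lifting) mem_Collect_eq sd_empty(1))
    then obtain Z' where Z': "Z' \<in> sSTS F Y0" "Z = p ` Z'" using h by blast
    then obtain Y where Y: "Y \<in> F" "Z' = sd Y Y0" unfolding sSTS_def by blast
    have "inv p ` Z = Z'" unfolding Z'(2) image_image permutes_inverses(2)[OF p] by simp
    then show "inv p ` Z \<in> D" unfolding D_def using Y by blast
  next
    show "{} \<in> D" unfolding D_def using Y0 by (metis image_eqI sd_empty(3))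
  qed
  have id: "(\<lambda>T. sig n p ` T) ` ((\<lambda>T. sig n (inv p) ` T) ` Wt n F) = Wt n F"
  proof -
    have "\<And>T. sig n p ` sig n (inv p) ` T = T"
      unfolding image_image using sig_inv[OF p q] permutes_inverses(1)[OF p] by simp
    then show ?thesis unfolding image_image by simp
  qed
  have eq: "(\<lambda>T. sig n p ` T) ` Wt n D = Wt n F"
  proof
    show "(\<lambda>T. sig n p ` T) ` Wt n D \<subseteq> Wt n F" by (rule sub1)
    have "Wt n F = (\<lambda>T. sig n p ` T) ` ((\<lambda>T. sig n (inv p) ` T) ` Wt n F)" using id by simp
    also have "\<dots> \<subseteq> (\<lambda>T. sig n p ` T) ` Wt n D" by (rule image_mono[OF sub2])
    finally show "Wt n F \<subseteq> (\<lambda>T. sig n p ` T) ` Wt n D" .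
  qed
  show ?thesis using sig_perm[OF p] eq L R by metis
qed



theorem theorem3:
  fixes n :: nat and C :: "bool list set"
  assumes "homogeneous n C"
  shows "homogeneous (2 * n + 1) (vasilev n C)"
proof -
  have pc: "perfect_code n C" and z: "replicate n False \<in> C"
    and hom: "\<forall>y\<in>C. \<exists>\<pi>. \<pi> permutes {..<n} \<and>
        (\<lambda>T. \<pi> ` T) ` STS C y = STS C (replicate n False)"
    using assms unfolding homogeneous_def by auto
  have Cw: "C \<subseteq> words n" by (rule perf_words[OF pc])
  define F where "F = supp ` C"
  have cm: "cover n F" "mind F" using perf_iff[OF Cw] pc unfolding F_def by auto
  have Fs: "F \<subseteq> Pow {..<n}" unfolding F_def using Cw supp_words by blast
  have e: "{} \<in> F" unfolding F_def using z supp_repl by (metis image_eqI)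
  define V where "V = vasilev n C"
  have Vw: "V \<subseteq> words (2*n+1)" unfolding V_def by (rule vas_words[OF Cw])
  have sV: "supp ` V = Gv n F" unfolding V_def F_def by (rule supp_vasilev[OF Cw])
  have pV: "perfect_code (2*n+1) V"
    using perf_iff[OF Vw] sV cover_Gv[OF Fs cm(1)] mind_Gv[OF Fs cm(2)] by simp
  have zV: "replicate (2*n+1) False \<in> V" unfolding V_def by (rule zero_vas[OF z])
  have zw: "replicate (2*n+1) False \<in> words (2*n+1)" by (simp add: words_def)
  have STS0: "STS V (replicate (2*n+1) False) = sSTS (Gv n F) {}"
    unfolding sSTS_def STS_s[OF Vw zw] supp_repl sV ..
  have "\<exists>\<pi>. \<pi> permutes {..<2*n+1} \<and>
        (\<lambda>T. \<pi> ` T) ` STS V v = STS V (replicate (2*n+1) False)" if v: "v \<in> V" for v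
  proof -
    obtain x y where xy: "x \<in> words n" "y \<in> C" "v = xorw x y @ [parity x] @ x"
      using v unfolding V_def vasilev_def by blast
    have lxy: "length x = n" "length y = n" using xy Cw by (auto simp: words_def)
    have sv: "supp v = enc n (supp x) (supp y)" using supp_vas[OF lxy] xy(3) by simp
    have vw: "v \<in> words (2*n+1)" using v Vw by blast
    have STSv: "STS V v = sSTS (Gv n F) (enc n (supp x) (supp y))"
      using STS_s[OF Vw vw] sV sv unfolding sSTS_def by simp
    obtain p where p: "p permutes {..<n}" "(\<lambda>T. p ` T) ` STS C y = STS C (replicate n False)"
      using hom xy(2) by blast
    have yw: "y \<in> words n" using xy(2) Cw by blast
    have rw: "replicate n False \<in> words n" by (simp add: words_def)
    have h: "(\<lambda>T. p ` T) ` sSTS F (supp y) = sSTS F {}"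
      using p(2) STS_s[OF Cw yw] STS_s[OF Cw rw] unfolding sSTS_def F_def by simp
    have Y0: "supp y \<in> F" unfolding F_def using xy(2) by blast
    have X0: "supp x \<subseteq> {..<n}" using supp_sub lxy(1) by blast
    obtain s where "s permutes {..<2*n+1}"
      "(\<lambda>T. s ` T) ` sSTS (Gv n F) (enc n (supp x) (supp y)) = sSTS (Gv n F) {}"
      using main_set[OF Fs e cm(2) Y0 X0 p(1) h] by blast
    then show ?thesis using STSv STS0 by metis
  qed
  then show ?thesis unfolding homogeneous_def V_def[symmetric] using pV zV by simp
qed


end
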